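(* Let $(X,d)$ be a compact metric space and $f_{0,\infty}=\{f_n\}_{n=0}^\infty$ an equi-continuous sequence of continuous self-maps of $X$. Then \[h^{*}(f_{0,\infty}^{n})=h^{*}(f_{0,\infty}),\quad n\geq1.\]
   Context: $f_{0,\infty}$ is equi-continuous if for every $\epsilon>0$ there is $\delta>0$ with $d(x,y)<\delta\Rightarrow d(f_n x,f_n y)<\epsilon$ for all $n$. $f_i^n=f_{i+n-1}\circ\cdots\circ f_i$, $f_i^0=\mathrm{id}$. The $n$-th compositions system is $f_{0,\infty}^n=\{f_{kn}^n\}_{k=0}^\infty$, i.e. the maps $f_{kn+n-1}\circ\cdots\circ f_{kn}$, $k\ge0$. $\mathcal S$ is the set of strictly increasing sequences $A=\{a_i\}_{i\ge1}$ of nonnegative integers. For a sequence $g_{0,\infty}$ of continuous self-maps, $h_A(g_{0,\infty})=\sup_{\mathscr A}\limsup_{m\to\infty}\frac1m\log\mathcal N(\bigvee_{i=1}^m (g_0^{a_i})^{-1}\mathscr A)$ over finite open covers $\mathscr A$ ($\bigvee$ = common refinement, $\mathcal N$ = minimal cardinality of a subcover), and $h^*(g_{0,\infty})=\sup_{A\in\mathcal S}h_A(g_{0,\infty})$. *)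

theory Defs
  imports "HOL-Analysis.Analysis"
begin

fun fcomp :: "(nat \<Rightarrow> 'a \<Rightarrow> 'a) \<Rightarrow> nat \<Rightarrow> nat \<Rightarrow> 'a \<Rightarrow> 'a" where
  "fcomp f i 0 = id"
| "fcomp f i (Suc n) = f (i + n) \<circ> fcomp f i n"

definition nth_system :: "(nat \<Rightarrow> 'a \<Rightarrow> 'a) \<Rightarrow> nat \<Rightarrow> nat \<Rightarrow> 'a \<Rightarrow> 'a" where
  "nth_system f n = (\<lambda>k. fcomp f (k * n) n)"

definition equicontinuous_seq :: "'a::metric_space set \<Rightarrow> (nat \<Rightarrow> 'a \<Rightarrow> 'a) \<Rightarrow> bool" where
  "equicontinuous_seq X f \<longleftrightarrow>
     (\<forall>e>0. \<exists>d>0. \<forall>n. \<forall>x\<in>X. \<forall>y\<in>X. dist x y < d \<longrightarrow> dist (f n x) (f n y) < e)"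

definition open_cover :: "'a::topological_space set \<Rightarrow> 'a set set \<Rightarrow> bool" where
  "open_cover X \<A> \<longleftrightarrow> finite \<A> \<and> (\<forall>U\<in>\<A>. openin (top_of_set X) U) \<and> \<Union>\<A> = X"

definition cover_num :: "'a set \<Rightarrow> 'a set set \<Rightarrow> nat" where
  "cover_num X \<A> = (LEAST k. \<exists>\<C>. \<C> \<subseteq> \<A> \<and> finite \<C> \<and> card \<C> = k \<and> X \<subseteq> \<Union>\<C>)"

definition join_pre :: "'a set \<Rightarrow> (nat \<Rightarrow> 'a \<Rightarrow> 'a) \<Rightarrow> (nat \<Rightarrow> nat) \<Rightarrow> nat \<Rightarrow> 'a set set \<Rightarrow> 'a set set" where
  "join_pre X g a m \<A> =
     {X \<inter> (\<Inter>i\<in>{..<m}. {x. fcomp g 0 (a i) x \<in> c i}) | c. \<forall>i<m. c i \<in> \<A>}"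

text \<open>h_A(g) for a strictly increasing sequence a (indexed from 0 here).\<close>
definition seq_entropy_along :: "'a::topological_space set \<Rightarrow> (nat \<Rightarrow> 'a \<Rightarrow> 'a) \<Rightarrow> (nat \<Rightarrow> nat) \<Rightarrow> ereal" where
  "seq_entropy_along X g a =
     (SUP \<A> \<in> {\<A>. open_cover X \<A>}.
        limsup (\<lambda>m. ereal (ln (real (cover_num X (join_pre X g a m \<A>))) / real m)))"

definition seq_entropy :: "'a::topological_space set \<Rightarrow> (nat \<Rightarrow> 'a \<Rightarrow> 'a) \<Rightarrow> ereal" where
  "seq_entropy X g = (SUP a \<in> {a. strict_mono a}. seq_entropy_along X g a)"

end

theory Submission
  imports Defs
begin

lemma fcomp_add: "fcomp f i (a + b) = fcomp f (i + a) b \<circ> fcomp f i a"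
  by (induction b) (auto simp: add.assoc)

lemma fcomp_nth: "fcomp (nth_system f n) 0 k = fcomp f 0 (k * n)"
proof (induction k)
  case 0 then show ?case by simp
next
  case (Suc k)
  have "fcomp f 0 (Suc k * n) = fcomp f (k*n) n \<circ> fcomp f 0 (k * n)"
    using fcomp_add[of f 0 "k*n" n] by (simp add: add.commute)
  then show ?case using Suc by (simp add: nth_system_def)
qed

lemma fcomp_into:
  assumes "\<And>k. f k ` X \<subseteq> X"
  shows "x \<in> X \<Longrightarrow> fcomp f j r x \<in> X"
  using assms by (induction r arbitrary: x) auto

lemma fcomp_equi:
  assumes "\<And>k. f k ` X \<subseteq> X" and "equicontinuous_seq X f"
  shows "\<forall>e>0. \<exists>d>0. \<forall>j. \<forall>x\<in>X. \<forall>y\<in>X. dist x y < d \<longrightarrow> dist (fcomp f j r x) (fcomp f j r y) < e"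
proof (induction r)
  case 0 then show ?case by auto
next
  case (Suc r)
  show ?case
  proof (intro allI impI)
    fix e :: real assume "e > 0"
    then obtain d1 where d1: "d1 > 0" "\<forall>n. \<forall>x\<in>X. \<forall>y\<in>X. dist x y < d1 \<longrightarrow> dist (f n x) (f n y) < e"
      using assms(2) unfolding equicontinuous_seq_def by blast
    then obtain d where d: "d > 0" "\<forall>j. \<forall>x\<in>X. \<forall>y\<in>X. dist x y < d \<longrightarrow> dist (fcomp f j r x) (fcomp f j r y) < d1"
      using Suc by blast
    show "\<exists>d>0. \<forall>j. \<forall>x\<in>X. \<forall>y\<in>X. dist x y < d \<longrightarrow> dist (fcomp f j (Suc r) x) (fcomp f j (Suc r) y) < e"
      using d d1 fcomp_into[OF assms(1)] by (intro exI[of _ d]) auto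
  qed
qed

lemma fcomp_equi_bounded:
  assumes "\<And>k. f k ` X \<subseteq> X" and "equicontinuous_seq X f"
  shows "\<forall>e>0. \<exists>d>0. \<forall>r<N. \<forall>j. \<forall>x\<in>X. \<forall>y\<in>X. dist x y < d \<longrightarrow> dist (fcomp f j r x) (fcomp f j r y) < e"
proof (induction N)
  case 0 then show ?case by (auto intro: exI[of _ 1])
next
  case (Suc N)
  show ?case
  proof (intro allI impI)
    fix e :: real assume "e > 0"
    then obtain d1 where d1: "d1 > 0" "\<forall>r<N. \<forall>j. \<forall>x\<in>X. \<forall>y\<in>X. dist x y < d1 \<longrightarrow> dist (fcomp f j r x) (fcomp f j r y) < e"
      using Suc by blast
    obtain d2 where d2: "d2 > 0" "\<forall>j. \<forall>x\<in>X. \<forall>y\<in>X. dist x y < d2 \<longrightarrow> dist (fcomp f j N x) (fcomp f j N y) < e"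
      using fcomp_equi[OF assms, of N] \<open>e > 0\<close> by blast
    show "\<exists>d>0. \<forall>r<Suc N. \<forall>j. \<forall>x\<in>X. \<forall>y\<in>X. dist x y < d \<longrightarrow> dist (fcomp f j r x) (fcomp f j r y) < e"
    proof (intro exI[of _ "min d1 d2"] conjI allI impI ballI)
      show "min d1 d2 > 0" using d1 d2 by simp
      fix r j x y assume "r < Suc N" "x \<in> X" "y \<in> X" "dist x y < min d1 d2"
      then show "dist (fcomp f j r x) (fcomp f j r y) < e"
        using d1 d2 by (cases "r = N") auto
    qed
  qed
qed

lemma cover_num_le:
  assumes "finite C" "X \<subseteq> \<Union>C" "\<forall>c\<in>C. \<exists>d\<in>D. c \<subseteq> d"
  shows "cover_num X D \<le> cover_num X C"
proof -
  let ?P = "\<lambda>E k. \<exists>\<C>. \<C> \<subseteq> E \<and> finite \<C> \<and> card \<C> = k \<and> X \<subseteq> \<Union>\<C>"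
  have "?P C (card C)" using assms by blast
  then have "?P C (cover_num X C)" unfolding cover_num_def by (rule LeastI)
  then obtain C0 where C0: "C0 \<subseteq> C" "finite C0" "card C0 = cover_num X C" "X \<subseteq> \<Union>C0" by blast
  obtain \<phi> where \<phi>: "\<forall>c\<in>C. \<phi> c \<in> D \<and> c \<subseteq> \<phi> c" using assms(3) by metis
  have "?P D (card (\<phi> ` C0))"
    using C0 \<phi> by (intro exI[of _ "\<phi> ` C0"]) blast
  then have "cover_num X D \<le> card (\<phi> ` C0)" unfolding cover_num_def by (rule Least_le)
  also have "\<dots> \<le> card C0" using C0(2) by (rule card_image_le)
  finally show ?thesis using C0 by simp
qed

lemma join_pre_finite:
  assumes "finite A"
  shows "finite (join_pre X g a m A)"
proof -
  have "join_pre X g a m A \<subseteq> (\<lambda>c. X \<inter> (\<Inter>i\<in>{..<m}. {x. fcomp g 0 (a i) x \<in> c i})) ` ({..<m} \<rightarrow>\<^sub>E A)"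
  proof
    fix S assume "S \<in> join_pre X g a m A"
    then obtain c where c: "\<forall>i<m. c i \<in> A" "S = X \<inter> (\<Inter>i\<in>{..<m}. {x. fcomp g 0 (a i) x \<in> c i})"
      unfolding join_pre_def by blast
    let ?c = "restrict c {..<m}"
    have "?c \<in> {..<m} \<rightarrow>\<^sub>E A" using c by auto
    moreover have "S = X \<inter> (\<Inter>i\<in>{..<m}. {x. fcomp g 0 (a i) x \<in> ?c i})" using c by auto
    ultimately show "S \<in> (\<lambda>c. X \<inter> (\<Inter>i\<in>{..<m}. {x. fcomp g 0 (a i) x \<in> c i})) ` ({..<m} \<rightarrow>\<^sub>E A)" by blast
  qed
  moreover have "finite ({..<m} \<rightarrow>\<^sub>E A)" using assms by (simp add: finite_PiE)
  ultimately show ?thesis by (meson finite_imageI finite_subset)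
qed

lemma join_pre_cover:
  assumes "\<And>k. g k ` X \<subseteq> X" "\<Union>A = X"
  shows "X \<subseteq> \<Union>(join_pre X g a m A)"
proof
  fix x assume x: "x \<in> X"
  have "\<forall>i<m. \<exists>U\<in>A. fcomp g 0 (a i) x \<in> U"
  proof (intro allI impI)
    fix i assume "i < m"
    have "fcomp g 0 (a i) x \<in> X" by (rule fcomp_into[OF assms(1) x])
    then show "\<exists>U\<in>A. fcomp g 0 (a i) x \<in> U" using assms(2) by blast
  qed
  then obtain c where c: "\<forall>i<m. c i \<in> A \<and> fcomp g 0 (a i) x \<in> c i" by metis
  let ?S = "X \<inter> (\<Inter>i\<in>{..<m}. {x. fcomp g 0 (a i) x \<in> c i})"
  have "?S \<in> join_pre X g a m A" unfolding join_pre_def using c by blast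
  moreover have "x \<in> ?S" using x c by simp
  ultimately show "x \<in> \<Union>(join_pre X g a m A)" by blast
qed

lemma ln_nat_mono: "a \<le> b \<Longrightarrow> ln (real a) \<le> ln (real b)"
  by (cases "a = 0"; cases "b = 0") auto

lemma along_nth:
  "seq_entropy_along X (nth_system f n) a = seq_entropy_along X f (\<lambda>i. a i * n)"
proof -
  have "\<And>m A. join_pre X (nth_system f n) a m A = join_pre X f (\<lambda>i. a i * n) m A"
    unfolding join_pre_def fcomp_nth by (rule refl)
  then show ?thesis unfolding seq_entropy_along_def by (simp only:)
qed

lemma easy_dir:
  assumes "n \<ge> 1"
  shows "seq_entropy X (nth_system f n) \<le> seq_entropy X f"
  unfolding seq_entropy_def
proof (rule SUP_least)
  fix a :: "nat \<Rightarrow> nat" assume "a \<in> {a. strict_mono a}"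
  then have "strict_mono (\<lambda>i. a i * n)" using assms
    by (auto simp: strict_mono_def)
  then show "seq_entropy_along X (nth_system f n) a \<le> (SUP a \<in> {a. strict_mono a}. seq_entropy_along X f a)"
    unfolding along_nth by (intro SUP_upper) auto
qed

lemma q_index:
  fixes q :: "nat \<Rightarrow> nat"
  assumes mono: "\<And>i t. i \<le> t \<Longrightarrow> q i \<le> q t" and inf: "infinite (range q)"
  shows "\<exists>j\<le>i. enumerate (range q) j = q i"
proof -
  let ?Q = "enumerate (range q)"
  obtain j where j: "?Q j = q i" using enumerate_Ex[OF inf, of "q i"] by blast
  define \<iota> where "\<iota> k = (SOME t. q t = ?Q k)" for k
  have \<iota>: "q (\<iota> k) = ?Q k" for k
  proof -
    have "?Q k \<in> range q" by (rule enumerate_in_set[OF inf])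
    then show ?thesis unfolding \<iota>_def by (metis (mono_tags, lifting) imageE someI)
  qed
  have smQ: "strict_mono ?Q" by (rule strict_mono_enumerate[OF inf])
  have "inj_on \<iota> {..<j}"
  proof (rule inj_onI)
    fix k l assume "\<iota> k = \<iota> l"
    then have "?Q k = ?Q l" using \<iota> by metis
    then show "k = l" using smQ strict_mono_eq by metis
  qed
  moreover have "\<iota> ` {..<j} \<subseteq> {..<i}"
  proof
    fix t assume "t \<in> \<iota> ` {..<j}"
    then obtain k where k: "k < j" "t = \<iota> k" by blast
    have "q t < q i" using k \<iota> j smQ by (metis strict_mono_less)
    then show "t \<in> {..<i}" using mono by (metis lessThan_iff not_le_imp_less leD)
  qed
  ultimately have "card {..<j} \<le> card {..<i}" by (intro card_inj_on_le) auto
  then show ?thesis using j by auto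
qed

lemma hard_dir:
  fixes X :: "'a::metric_space set" and f :: "nat \<Rightarrow> 'a \<Rightarrow> 'a" and n :: nat
  assumes cX: "compact X"
    and into: "\<And>k. f k ` X \<subseteq> X"
    and eq: "equicontinuous_seq X f"
    and n: "n \<ge> 1"
    and a: "strict_mono a"
    and A: "open_cover X A"
  shows "limsup (\<lambda>m. ereal (ln (real (cover_num X (join_pre X f a m A))) / real m))
           \<le> seq_entropy X (nth_system f n)"
proof -
  define g where "g = nth_system f n"
  have intog: "g k ` X \<subseteq> X" for k
  proof
    fix y assume "y \<in> g k ` X"
    then obtain x where "x \<in> X" "y = g k x" by blast
    moreover have "g k x = fcomp f (k*n) n x" unfolding g_def nth_system_def by (rule refl)
    ultimately show "y \<in> X" using fcomp_into[of f X, OF into] by metis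
  qed
  have "\<forall>U\<in>A. \<exists>T. open T \<and> U = X \<inter> T"
    using A unfolding open_cover_def openin_open by blast
  then obtain \<tau> where \<tau>: "\<forall>U\<in>A. open (\<tau> U) \<and> U = X \<inter> \<tau> U" by metis
  have XA: "\<Union>A = X" using A unfolding open_cover_def by blast
  have sub: "X \<subseteq> \<Union>(\<tau> ` A)" using \<tau> XA by blast
  have opn: "\<And>G. G \<in> \<tau> ` A \<Longrightarrow> open G" using \<tau> by blast
  obtain \<epsilon> where \<epsilon>: "\<epsilon> > 0" "\<And>x. x \<in> X \<Longrightarrow> \<exists>G \<in> \<tau> ` A. ball x \<epsilon> \<subseteq> G"
    using Heine_Borel_lemma[OF cX sub opn] by blast
  have leb: "\<exists>U\<in>A. ball x \<epsilon> \<inter> X \<subseteq> U" if xX: "x \<in> X" for x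
  proof -
    obtain U where "U \<in> A" "ball x \<epsilon> \<subseteq> \<tau> U" using \<epsilon>(2)[OF xX] by blast
    then show ?thesis using \<tau> by blast
  qed
  obtain \<delta> where \<delta>: "\<delta> > 0" "\<forall>r<n. \<forall>j. \<forall>x\<in>X. \<forall>y\<in>X. dist x y < \<delta> \<longrightarrow> dist (fcomp f j r x) (fcomp f j r y) < \<epsilon>"
    using fcomp_equi_bounded[OF into eq, of n] \<epsilon>(1) by blast
  obtain S where S: "finite S" "S \<subseteq> X" "X \<subseteq> (\<Union>x\<in>S. ball x \<delta>)"
    using seq_compact_imp_totally_bounded[OF compact_imp_seq_compact[OF cX]] \<delta>(1) by blast
  define B where "B = (\<lambda>x. ball x \<delta> \<inter> X) ` S"
  have opb: "openin (top_of_set X) (ball x \<delta> \<inter> X)" for x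
    using openin_open_Int[OF open_ball, of X x \<delta>] by (simp add: Int_commute)
  have B: "open_cover X B"
    unfolding open_cover_def B_def using S opb by auto
  have finB: "finite B" using B unfolding open_cover_def by blast
  have XB: "\<Union>B = X" using B unfolding open_cover_def by blast
  have key: "\<exists>U\<in>A. fcomp f j r ` b \<subseteq> U" if bB: "b \<in> B" and rn: "r < n" for b j r
  proof -
    obtain x where x: "x \<in> S" "b = ball x \<delta> \<inter> X" using bB unfolding B_def by blast
    have xX: "x \<in> X" using x S by blast
    have yX: "fcomp f j r x \<in> X" by (rule fcomp_into[of f X, OF into xX])
    obtain U where U: "U \<in> A" "ball (fcomp f j r x) \<epsilon> \<inter> X \<subseteq> U" using leb[OF yX] by blast
    have "fcomp f j r ` b \<subseteq> U"
    proof
      fix w assume "w \<in> fcomp f j r ` b"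
      then obtain z where z: "z \<in> X" "dist x z < \<delta>" "w = fcomp f j r z" using x by (auto simp: dist_commute)
      have "dist (fcomp f j r x) w < \<epsilon>" using \<delta>(2) rn xX z by blast
      moreover have "w \<in> X" using fcomp_into[of f X, OF into z(1)] z(3) by blast
      ultimately show "w \<in> U" using U(2) by auto
    qed
    then show ?thesis using U(1) by blast
  qed
  define q where "q i = a i div n" for i
  have qmono: "q i \<le> q t" if "i \<le> t" for i t
    unfolding q_def using a that by (simp add: div_le_mono strict_mono_less_eq)
  have qinf: "infinite (range q)"
    unfolding infinite_nat_iff_unbounded_le
  proof
    fix M
    have "M * n \<le> a (M * n)" using a by (rule seq_suble)
    then have "M \<le> q (M * n)" unfolding q_def using n
      by (metis div_le_mono nonzero_mult_div_cancel_right not_one_le_zero)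
    then show "\<exists>v\<ge>M. v \<in> range q" by blast
  qed
  define Q where "Q = enumerate (range q)"
  have smQ: "strict_mono Q" unfolding Q_def by (rule strict_mono_enumerate[OF qinf])
  have "\<forall>i. \<exists>j. j \<le> i \<and> Q j = q i" using q_index[OF qmono qinf] unfolding Q_def by blast
  then obtain p where p: "\<And>i. p i \<le> i" "\<And>i. Q (p i) = q i" by metis
  have decomp: "fcomp f 0 (a i) = fcomp f (q i * n) (a i mod n) \<circ> fcomp g 0 (q i)" for i
  proof -
    have "a i = q i * n + a i mod n" unfolding q_def by simp
    then have "fcomp f 0 (a i) = fcomp f 0 (q i * n + a i mod n)" by simp
    also have "\<dots> = fcomp f (q i * n) (a i mod n) \<circ> fcomp f 0 (q i * n)"
      using fcomp_add[of f 0 "q i * n" "a i mod n"] by simp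
    finally show ?thesis unfolding g_def fcomp_nth .
  qed
  have cn: "cover_num X (join_pre X f a m A) \<le> cover_num X (join_pre X g Q m B)" for m
  proof (rule cover_num_le)
    show "finite (join_pre X g Q m B)" by (rule join_pre_finite[OF finB])
    show "X \<subseteq> \<Union>(join_pre X g Q m B)" by (rule join_pre_cover[OF intog XB])
    show "\<forall>c\<in>join_pre X g Q m B. \<exists>d\<in>join_pre X f a m A. c \<subseteq> d"
    proof
      fix c assume "c \<in> join_pre X g Q m B"
      then obtain c' where c': "\<forall>j<m. c' j \<in> B" "c = X \<inter> (\<Inter>j\<in>{..<m}. {x. fcomp g 0 (Q j) x \<in> c' j})"
        unfolding join_pre_def by blast
      define cc where "cc i = (SOME U. U \<in> A \<and> fcomp f (q i * n) (a i mod n) ` (c' (p i)) \<subseteq> U)" for i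
      have cc: "cc i \<in> A \<and> fcomp f (q i * n) (a i mod n) ` (c' (p i)) \<subseteq> cc i" if "i < m" for i
      proof -
        have "p i < m" using p(1)[of i] that by linarith
        then have "c' (p i) \<in> B" using c' by blast
        moreover have "a i mod n < n" using n by simp
        ultimately have "\<exists>U. U \<in> A \<and> fcomp f (q i * n) (a i mod n) ` (c' (p i)) \<subseteq> U"
          using key by blast
        then show ?thesis unfolding cc_def by (rule someI_ex)
      qed
      have "X \<inter> (\<Inter>i\<in>{..<m}. {x. fcomp f 0 (a i) x \<in> cc i}) \<in> join_pre X f a m A"
        unfolding join_pre_def using cc by blast
      moreover have "c \<subseteq> X \<inter> (\<Inter>i\<in>{..<m}. {x. fcomp f 0 (a i) x \<in> cc i})"
      proof
        fix x assume x: "x \<in> c"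
        have xX: "x \<in> X" using x c' by blast
        have "fcomp f 0 (a i) x \<in> cc i" if "i < m" for i
        proof -
          have "p i < m" using p(1)[of i] that by linarith
          then have "fcomp g 0 (Q (p i)) x \<in> c' (p i)" using x c' by blast
          then have "fcomp g 0 (q i) x \<in> c' (p i)" using p(2) by simp
          then have "fcomp f (q i * n) (a i mod n) (fcomp g 0 (q i) x) \<in> cc i"
            using cc[OF that] by blast
          then show ?thesis using decomp by simp
        qed
        then show "x \<in> X \<inter> (\<Inter>i\<in>{..<m}. {x. fcomp f 0 (a i) x \<in> cc i})" using xX by blast
      qed
      ultimately show "\<exists>d\<in>join_pre X f a m A. c \<subseteq> d" by blast
    qed
  qed
  have "limsup (\<lambda>m. ereal (ln (real (cover_num X (join_pre X f a m A))) / real m))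
      \<le> limsup (\<lambda>m. ereal (ln (real (cover_num X (join_pre X g Q m B))) / real m))"
  proof (rule Limsup_mono[OF always_eventually], rule allI)
    fix m
    show "ereal (ln (real (cover_num X (join_pre X f a m A))) / real m)
      \<le> ereal (ln (real (cover_num X (join_pre X g Q m B))) / real m)"
      using ln_nat_mono[OF cn[of m]] by (simp add: divide_right_mono)
  qed
  also have "\<dots> \<le> seq_entropy_along X g Q"
    unfolding seq_entropy_along_def using B by (intro SUP_upper) auto
  also have "\<dots> \<le> seq_entropy X g"
    unfolding seq_entropy_def using smQ by (intro SUP_upper) auto
  finally show ?thesis unfolding g_def .
qed

theorem theorem4p4:
  fixes X :: "'a::metric_space set" and f :: "nat \<Rightarrow> 'a \<Rightarrow> 'a" and n :: nat
  assumes "compact X"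
    and "\<And>k. continuous_on X (f k)"
    and "\<And>k. f k ` X \<subseteq> X"
    and "equicontinuous_seq X f"
    and "n \<ge> 1"
  shows "seq_entropy X (nth_system f n) = seq_entropy X f"
proof (rule antisym)
  show "seq_entropy X (nth_system f n) \<le> seq_entropy X f" by (rule easy_dir[OF assms(5)])
  show "seq_entropy X f \<le> seq_entropy X (nth_system f n)"
    unfolding seq_entropy_def[of X f]
  proof (rule SUP_least)
    fix a :: "nat \<Rightarrow> nat" assume a: "a \<in> {a. strict_mono a}"
    show "seq_entropy_along X f a \<le> seq_entropy X (nth_system f n)"
      unfolding seq_entropy_along_def
    proof (rule SUP_least)
      fix A assume "A \<in> {A. open_cover X A}"
      then show "limsup (\<lambda>m. ereal (ln (real (cover_num X (join_pre X f a m A))) / real m))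
           \<le> seq_entropy X (nth_system f n)"
        using hard_dir[OF assms(1,3,4,5)] a by blast
    qed
  qed
qed

end
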